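(* Let $F$ be an Archimedean vector lattice and $E\subset F$ a sublattice. If $E$ is regular and the ideal $I(E)$ generated by $E$ is a projection band, then the inclusion of $E$ into $F$ is an order embedding. Conversely, if $E$ is order dense in $I(E)$ and the inclusion of $E$ into $F$ is an order embedding, then $I(E)$ is a projection band.
   Context: A sublattice $E\subset F$ is regular if for every $G\subset E$ with $\bigwedge_E G=0$ (infimum in $E$) one has $\bigwedge_F G=0$. $E$ is order dense in a sublattice $H\supset E$ if for every $h\in H$ with $h>0$ there is $e\in E$ with $0<e\le h$. An ideal $H$ is a projection band if $F=H+H^d$, where $H^d$ is the disjoint complement. A net order converges to $f$ if there is a set $G$ with $\bigwedge G=0$ such that for every $g\in G$ the net is eventually in $[f-g,f+g]$. The inclusion of $E$ into $F$ is an order embedding if for nets in $E$ and points of $E$, order convergence in $E$ is equivalent to order convergence in $F$. *)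

theory Defs
  imports Complex_Main
begin

text \<open>Vector lattices are modelled by the type class
  ordered_real_vector + lattice (the lattice order is the vector order).\<close>

definition vabs :: "'a::{ordered_real_vector, lattice} \<Rightarrow> 'a" where
  "vabs x = sup x (- x)"

definition archimedean_vl :: "'a::{ordered_real_vector, lattice} itself \<Rightarrow> bool" where
  "archimedean_vl _ \<longleftrightarrow>
     (\<forall>x y :: 'a. 0 \<le> x \<and> (\<forall>n::nat. real n *\<^sub>R x \<le> y) \<longrightarrow> x = 0)"

definition vector_sublattice :: "'a::{ordered_real_vector, lattice} set \<Rightarrow> bool" where
  "vector_sublattice E \<longleftrightarrow> subspace E \<and>
     (\<forall>x\<in>E. \<forall>y\<in>E. sup x y \<in> E \<and> inf x y \<in> E)"

definition is_inf_in :: "'a::order set \<Rightarrow> 'a set \<Rightarrow> 'a \<Rightarrow> bool" where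
  "is_inf_in S G x \<longleftrightarrow> x \<in> S \<and> (\<forall>g\<in>G. x \<le> g) \<and>
     (\<forall>y\<in>S. (\<forall>g\<in>G. y \<le> g) \<longrightarrow> y \<le> x)"

definition regular_sublattice :: "'a::{ordered_real_vector, lattice} set \<Rightarrow> bool" where
  "regular_sublattice E \<longleftrightarrow>
     (\<forall>G. G \<subseteq> E \<and> is_inf_in E G 0 \<longrightarrow> is_inf_in UNIV G 0)"

definition order_ideal :: "'a::{ordered_real_vector, lattice} set \<Rightarrow> bool" where
  "order_ideal H \<longleftrightarrow> subspace H \<and>
     (\<forall>f g. g \<in> H \<and> vabs f \<le> vabs g \<longrightarrow> f \<in> H)"

definition ideal_gen :: "'a::{ordered_real_vector, lattice} set \<Rightarrow> 'a set" where
  "ideal_gen E = \<Inter> {H. order_ideal H \<and> E \<subseteq> H}"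

definition disj_compl :: "'a::{ordered_real_vector, lattice} set \<Rightarrow> 'a set" where
  "disj_compl H = {f. \<forall>h\<in>H. inf (vabs f) (vabs h) = 0}"

definition projection_band :: "'a::{ordered_real_vector, lattice} set \<Rightarrow> bool" where
  "projection_band H \<longleftrightarrow> order_ideal H \<and>
     (\<forall>f. \<exists>h\<in>H. \<exists>k\<in>disj_compl H. f = h + k)"

definition order_dense_in :: "'a::{ordered_real_vector, lattice} set \<Rightarrow> 'a set \<Rightarrow> bool" where
  "order_dense_in E H \<longleftrightarrow> (\<forall>h\<in>H. 0 < h \<longrightarrow> (\<exists>e\<in>E. 0 < e \<and> e \<le> h))"

definition order_conv_in ::
  "'a::{ordered_real_vector, lattice} set \<Rightarrow> 'i filter \<Rightarrow> ('i \<Rightarrow> 'a) \<Rightarrow> 'a \<Rightarrow> bool" where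
  "order_conv_in S N x f \<longleftrightarrow> (\<exists>G. G \<subseteq> S \<and> is_inf_in S G 0 \<and>
     (\<forall>g\<in>G. \<forall>\<^sub>F i in N. f - g \<le> x i \<and> x i \<le> f + g))"

text \<open>A net over a directed set is represented by its tail filter
  (a proper filter); up to re-indexing every net in E is a map into E along a proper
  filter on the carrier type, which suffices since order convergence depends only on
  the image filter.\<close>
definition order_embedding :: "'a::{ordered_real_vector, lattice} set \<Rightarrow> bool" where
  "order_embedding E \<longleftrightarrow>
     (\<forall>(N :: 'a filter) (x :: 'a \<Rightarrow> 'a) f. N \<noteq> bot \<longrightarrow> (\<forall>\<^sub>F i in N. x i \<in> E) \<longrightarrow> f \<in> E \<longrightarrow>
        (order_conv_in E N x f \<longleftrightarrow> order_conv_in UNIV N x f))"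

end

theory Submission
  imports Defs
begin


lemma add_inf_l: "(a::'a::{ordered_real_vector, lattice}) + inf b c = inf (a + b) (a + c)"
proof (intro order.antisym)
  show "inf (a + b) (a + c) \<le> a + inf b c"
    by (metis add.commute diff_le_eq inf_greatest inf_le1 inf_le2)
qed simp

lemma add_sup_l: "(a::'a::{ordered_real_vector, lattice}) + sup b c = sup (a + b) (a + c)"
proof (rule order.antisym)
  show "a + sup b c \<le> sup (a + b) (a + c)"
    by (metis add.commute le_diff_eq sup.bounded_iff sup_ge1 sup_ge2)
qed simp

lemma neg_sup: "- sup (a::'a::{ordered_real_vector, lattice}) b = inf (-a) (-b)"
proof (rule order.antisym)
  show "- sup a b \<le> inf (- a) (- b)" by simp
  have "sup a b \<le> - inf (-a) (-b)"
    by (metis inf_le1 inf_le2 le_minus_iff minus_minus sup_least)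
  then show "inf (- a) (- b) \<le> - sup a b" by (metis le_minus_iff)
qed

lemma neg_inf: "- inf (a::'a::{ordered_real_vector, lattice}) b = sup (-a) (-b)"
  using neg_sup[of "-a" "-b"] by (metis minus_minus)

lemma sub_inf: "(x::'a::{ordered_real_vector, lattice}) - inf x y = sup (x - y) 0"
proof -
  have "x - inf x y = x + sup (-x) (-y)" using neg_inf[of x y] by simp
  also have "\<dots> = sup (x + - x) (x + - y)" by (rule add_sup_l)
  finally show ?thesis by (simp add: sup_commute)
qed

lemma inf_sup_add: "inf (x::'a::{ordered_real_vector, lattice}) y + sup x y = x + y"
proof -
  have "x + y - inf x y = sup (x + y - x) (x + y - y)"
  proof -
    have "x + y - inf x y = (x + y) + sup (-x) (-y)" using neg_inf[of x y] by simp
    also have "\<dots> = sup ((x + y) + - x) ((x + y) + - y)" by (rule add_sup_l)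
    finally show ?thesis by simp
  qed
  then have "x + y - inf x y = sup x y" by (simp add: sup_commute)
  then show ?thesis by (metis add.commute diff_add_cancel)
qed

lemma pos_neg_disj: "inf (sup (a::'a::{ordered_real_vector, lattice}) 0) (sup (-a) 0) = 0"
proof -
  have 1: "sup a 0 + - a = sup 0 (-a)"
    using add_sup_l[of "-a" a 0] by (simp add: add.commute)
  have "sup a 0 + sup (-a) 0 = sup (sup a 0 + - a) (sup a 0 + 0)" by (rule add_sup_l)
  also have "\<dots> = sup (sup a 0) (sup (-a) 0)" unfolding 1 by (simp add: sup.assoc sup.commute sup.left_commute)
  finally have s: "sup a 0 + sup (-a) 0 = sup (sup a 0) (sup (-a) 0)" .
  show ?thesis using inf_sup_add[of "sup a 0" "sup (-a) 0"] unfolding s by simp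
qed

lemma subadd:
  fixes x y z :: "'a::{ordered_real_vector, lattice}"
  assumes "0 \<le> x" "0 \<le> y" "0 \<le> z"
  shows "inf x (y + z) \<le> inf x y + inf x z"
proof -
  define u where "u = inf x (y + z)"
  have d: "u - inf u y = sup (u - y) 0" by (rule sub_inf)
  have "u - y \<le> z" unfolding u_def by (simp add: diff_le_eq add.commute le_infI2)
  moreover have "u - y \<le> x"
  proof -
    have "u - y \<le> u" using assms(2) by simp
    also have "u \<le> x" unfolding u_def by simp
    finally show ?thesis .
  qed
  moreover have "0 \<le> inf x z" using assms by simp
  ultimately have "sup (u - y) 0 \<le> inf x z" by simp
  moreover have "inf u y \<le> inf x y" unfolding u_def by (simp add: le_infI1)
  ultimately have "inf u y + (u - inf u y) \<le> inf x y + inf x z" unfolding d by (simp add: add_mono)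
  then have "u \<le> inf x y + inf x z" by simp
  then show ?thesis unfolding u_def .
qed

lemma disj_scale:
  fixes p w :: "'a::{ordered_real_vector, lattice}"
  assumes "0 \<le> p" "0 \<le> w" "inf p w = 0"
  shows "inf p (real n *\<^sub>R w) = 0"
proof (induction n)
  case 0 then show ?case using assms(1) by (simp add: inf.absorb2)
next
  case (Suc n)
  have "inf p (real (Suc n) *\<^sub>R w) = inf p (real n *\<^sub>R w + w)"
    by (simp add: algebra_simps)
  also have "\<dots> \<le> inf p (real n *\<^sub>R w) + inf p w"
    using assms by (intro subadd) (auto simp: scaleR_nonneg_nonneg)
  finally have "inf p (real (Suc n) *\<^sub>R w) \<le> 0" using Suc assms by simp
  moreover have "0 \<le> inf p (real (Suc n) *\<^sub>R w)" using assms by (simp add: scaleR_nonneg_nonneg)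
  ultimately show ?case by (rule order.antisym)
qed

lemma half_pos: "0 \<le> (x::'a::{ordered_real_vector, lattice}) + x \<Longrightarrow> 0 \<le> x"
proof -
  assume h: "0 \<le> x + x"
  have "x = (1/2::real) *\<^sub>R (x + x)" by (simp add: scaleR_2[symmetric])
  also have "0 \<le> \<dots>" using h by (intro scaleR_nonneg_nonneg) auto
  finally show ?thesis .
qed

lemma vabs_nonneg: "0 \<le> vabs (a::'a::{ordered_real_vector, lattice})"
proof -
  have "0 = a + - a" by simp
  also have "\<dots> \<le> sup a (-a) + sup a (-a)"
    by (intro add_mono) auto
  finally show ?thesis unfolding vabs_def by (rule half_pos)
qed

lemma vabs_le_iff: "vabs (a::'a::{ordered_real_vector, lattice}) \<le> e \<longleftrightarrow> a \<le> e \<and> -a \<le> e"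
  unfolding vabs_def by simp

lemma vabs_ge: "(a::'a::{ordered_real_vector, lattice}) \<le> vabs a" "-a \<le> vabs a"
  unfolding vabs_def by simp_all

lemma vabs_pos: "0 \<le> (a::'a::{ordered_real_vector, lattice}) \<Longrightarrow> vabs a = a"
proof -
  assume h: "0 \<le> a"
  have "-a \<le> 0" using h by simp
  also note h
  finally show ?thesis unfolding vabs_def by (rule sup.absorb1)
qed

lemma vabs_minus: "vabs (- (a::'a::{ordered_real_vector, lattice})) = vabs a"
  unfolding vabs_def minus_minus by (rule sup.commute)

lemma vabs_triangle: "vabs ((a::'a::{ordered_real_vector, lattice}) + b) \<le> vabs a + vabs b"
proof -
  have "a + b \<le> vabs a + vabs b" using vabs_ge(1)[of a] vabs_ge(1)[of b] by (rule add_mono)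
  moreover have "-a + -b \<le> vabs a + vabs b" using vabs_ge(2)[of a] vabs_ge(2)[of b] by (rule add_mono)
  ultimately show ?thesis unfolding vabs_le_iff by (simp add: add.commute)
qed

lemma vabs_scale: "vabs (c *\<^sub>R (a::'a::{ordered_real_vector, lattice})) \<le> \<bar>c\<bar> *\<^sub>R vabs a"
proof (cases "c \<ge> 0")
  case True
  then have e: "\<bar>c\<bar> *\<^sub>R vabs a = c *\<^sub>R vabs a" by simp
  show ?thesis unfolding vabs_le_iff e
    using scaleR_left_mono[OF vabs_ge(1)[of a] True] scaleR_left_mono[OF vabs_ge(2)[of a] True] by (simp only: scaleR_minus_right)
next
  case False
  then have c: "0 \<le> - c" by simp
  from False have e: "\<bar>c\<bar> *\<^sub>R vabs a = (- c) *\<^sub>R vabs a" by simp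
  show ?thesis unfolding vabs_le_iff e
    using scaleR_left_mono[OF vabs_ge(1)[of a] c] scaleR_left_mono[OF vabs_ge(2)[of a] c] by (simp only: scaleR_minus_right scaleR_minus_left minus_minus)
qed



lemma vsl_sup: "vector_sublattice E \<Longrightarrow> x \<in> E \<Longrightarrow> y \<in> E \<Longrightarrow> sup x y \<in> E"
  unfolding vector_sublattice_def by blast
lemma vsl_inf: "vector_sublattice E \<Longrightarrow> x \<in> E \<Longrightarrow> y \<in> E \<Longrightarrow> inf x y \<in> E"
  unfolding vector_sublattice_def by blast
lemma vsl_sub: "vector_sublattice E \<Longrightarrow> subspace E"
  unfolding vector_sublattice_def by blast

lemma vsl_vabs: "vector_sublattice (E::'a::{ordered_real_vector, lattice} set) \<Longrightarrow> x \<in> E \<Longrightarrow> vabs x \<in> E"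
  unfolding vabs_def by (intro vsl_sup subspace_neg vsl_sub) auto

definition domset :: "'a::{ordered_real_vector, lattice} set \<Rightarrow> 'a set" where
  "domset E = {f. \<exists>e\<in>E. 0 \<le> e \<and> vabs f \<le> e}"

lemma domset_ideal:
  fixes E :: "'a::{ordered_real_vector, lattice} set"
  assumes E: "vector_sublattice E"
  shows "order_ideal (domset E)"
  unfolding order_ideal_def
proof safe
  have S: "subspace E" using E by (rule vsl_sub)
  show "subspace (domset E)"
  proof (rule subspaceI)
    show "0 \<in> domset E" unfolding domset_def using subspace_0[OF S]
      by (intro CollectI bexI[of _ 0]) (auto simp: vabs_pos)
  next
    fix x y assume "x \<in> domset E" "y \<in> domset E"
    then obtain e1 e2 where e: "e1 \<in> E" "0 \<le> e1" "vabs x \<le> e1" "e2 \<in> E" "0 \<le> e2" "vabs y \<le> e2"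
      unfolding domset_def by blast
    have "vabs (x + y) \<le> e1 + e2" using vabs_triangle[of x y] add_mono[OF e(3) e(6)] by (rule order_trans)
    then show "x + y \<in> domset E" unfolding domset_def using e subspace_add[OF S e(1) e(4)]
      by (intro CollectI bexI[of _ "e1 + e2"]) auto
  next
    fix c x assume "x \<in> domset E"
    then obtain e where e: "e \<in> E" "0 \<le> e" "vabs x \<le> e"
      unfolding domset_def by blast
    have "vabs (c *\<^sub>R x) \<le> \<bar>c\<bar> *\<^sub>R e"
      using vabs_scale[of c x] scaleR_left_mono[OF e(3), of "\<bar>c\<bar>"] by simp
    then show "c *\<^sub>R x \<in> domset E" unfolding domset_def using e subspace_scale[OF S e(1)]
      by (intro CollectI bexI[of _ "\<bar>c\<bar> *\<^sub>R e"]) (auto simp: scaleR_nonneg_nonneg)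
  qed
next
  fix f g assume "g \<in> domset E" "vabs f \<le> vabs g"
  then show "f \<in> domset E" unfolding domset_def by (blast intro: order_trans)
qed

lemma E_sub_domset:
  fixes E :: "'a::{ordered_real_vector, lattice} set"
  assumes E: "vector_sublattice E"
  shows "E \<subseteq> domset E"
  unfolding domset_def using vsl_vabs[OF E] vabs_nonneg by blast

lemma ideal_gen_sub_domset:
  fixes E :: "'a::{ordered_real_vector, lattice} set"
  assumes E: "vector_sublattice E"
  shows "ideal_gen E \<subseteq> domset E"
  unfolding ideal_gen_def using domset_ideal[OF E] E_sub_domset[OF E] by blast

lemma E_sub_ideal_gen: "E \<subseteq> ideal_gen E"
  unfolding ideal_gen_def by blast

lemma ideal_gen_ideal: "order_ideal (ideal_gen (E::'a::{ordered_real_vector, lattice} set))"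
  unfolding order_ideal_def
proof safe
  show "subspace (ideal_gen E)" unfolding ideal_gen_def
    by (rule subspace_Inter) (auto simp: order_ideal_def)
next
  fix f g assume "g \<in> ideal_gen E" "vabs f \<le> vabs g"
  then show "f \<in> ideal_gen E" unfolding ideal_gen_def order_ideal_def by blast
qed

lemma ideal_gen_solid: "g \<in> ideal_gen E \<Longrightarrow> vabs f \<le> vabs g \<Longrightarrow> f \<in> ideal_gen E"
  using ideal_gen_ideal unfolding order_ideal_def by blast



definition pairnet :: "'a::{ordered_real_vector, lattice} set \<Rightarrow> 'a filter" where
  "pairnet A = Abs_filter (\<lambda>Q. \<exists>a0\<in>A. \<forall>a\<in>A. \<forall>a'\<in>A. a0 \<le> a \<and> a \<le> a' \<longrightarrow> Q (a' - a))"

lemma eventually_pairnet: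
  fixes A :: "'a::{ordered_real_vector, lattice} set"
  assumes "z \<in> A" "\<forall>x\<in>A. \<forall>y\<in>A. sup x y \<in> A"
  shows "eventually Q (pairnet A) \<longleftrightarrow> (\<exists>a0\<in>A. \<forall>a\<in>A. \<forall>a'\<in>A. a0 \<le> a \<and> a \<le> a' \<longrightarrow> Q (a' - a))"
  unfolding pairnet_def
proof (rule eventually_Abs_filter, rule is_filter.intro)
  show "\<exists>a0\<in>A. \<forall>a\<in>A. \<forall>a'\<in>A. a0 \<le> a \<and> a \<le> a' \<longrightarrow> True" using assms by blast
next
  fix P Q
  assume "\<exists>a0\<in>A. \<forall>a\<in>A. \<forall>a'\<in>A. a0 \<le> a \<and> a \<le> a' \<longrightarrow> P (a' - a)"
    "\<exists>a0\<in>A. \<forall>a\<in>A. \<forall>a'\<in>A. a0 \<le> a \<and> a \<le> a' \<longrightarrow> Q (a' - a)"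
  then obtain a1 a2 where a: "a1 \<in> A" "\<forall>a\<in>A. \<forall>a'\<in>A. a1 \<le> a \<and> a \<le> a' \<longrightarrow> P (a' - a)"
    "a2 \<in> A" "\<forall>a\<in>A. \<forall>a'\<in>A. a2 \<le> a \<and> a \<le> a' \<longrightarrow> Q (a' - a)" by blast
  show "\<exists>a0\<in>A. \<forall>a\<in>A. \<forall>a'\<in>A. a0 \<le> a \<and> a \<le> a' \<longrightarrow> P (a' - a) \<and> Q (a' - a)"
    using a assms(2) by (intro bexI[of _ "sup a1 a2"]) auto
next
  fix P Q :: "'a \<Rightarrow> bool"
  assume "\<forall>x. P x \<longrightarrow> Q x" "\<exists>a0\<in>A. \<forall>a\<in>A. \<forall>a'\<in>A. a0 \<le> a \<and> a \<le> a' \<longrightarrow> P (a' - a)"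
  then show "\<exists>a0\<in>A. \<forall>a\<in>A. \<forall>a'\<in>A. a0 \<le> a \<and> a \<le> a' \<longrightarrow> Q (a' - a)" by blast
qed

lemma upper_minus_inf:
  fixes A :: "'a::{ordered_real_vector, lattice} set"
  assumes arch: "archimedean_vl TYPE('a)"
    and A0: "0 \<in> A" and fB: "\<forall>a\<in>A. a \<le> f"
    and w: "\<forall>b a. a \<in> A \<and> (\<forall>a'\<in>A. a' \<le> b) \<longrightarrow> w \<le> b - a"
  shows "w \<le> 0"
proof -
  define v where "v = sup w 0"
  have v: "\<And>b a. a \<in> A \<Longrightarrow> (\<forall>a'\<in>A. a' \<le> b) \<Longrightarrow> v \<le> b - a"
    unfolding v_def using w by auto
  have "\<forall>a\<in>A. a \<le> f - real n *\<^sub>R v" for n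
  proof (induction n)
    case 0 then show ?case using fB by simp
  next
    case (Suc n)
    show ?case
    proof
      fix a assume "a \<in> A"
      then have "v \<le> (f - real n *\<^sub>R v) - a" using v Suc by blast
      then show "a \<le> f - real (Suc n) *\<^sub>R v" by (simp add: algebra_simps)
    qed
  qed
  then have "real n *\<^sub>R v \<le> f" for n using A0 by (metis diff_ge_0_iff_ge diff_zero)
  moreover have "0 \<le> v" unfolding v_def by simp
  ultimately have "v = 0" using arch unfolding archimedean_vl_def by blast
  then show ?thesis unfolding v_def by (metis sup_ge1)
qed


lemma pos_decomp:
  fixes E :: "'a::{ordered_real_vector, lattice} set"
  assumes arch: "archimedean_vl TYPE('a)"
    and E: "vector_sublattice E"
    and dense: "order_dense_in E (ideal_gen E)"
    and emb: "order_embedding E"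
    and f0: "0 \<le> f"
  shows "\<exists>h\<in>ideal_gen E. \<exists>k\<in>disj_compl (ideal_gen E). f = h + k"
proof -
  have S: "subspace E" using E by (rule vsl_sub)
  define A where "A = {e\<in>E. 0 \<le> e \<and> e \<le> f}"
  have A0: "0 \<in> A" unfolding A_def using f0 subspace_0[OF S] by simp
  have Asup: "\<forall>x\<in>A. \<forall>y\<in>A. sup x y \<in> A" unfolding A_def using vsl_sup[OF E] by (auto intro: le_supI1)
  have AE: "A \<subseteq> E" unfolding A_def by blast
  note ev = eventually_pairnet[OF A0 Asup]
  define N where "N = pairnet A"
  have Nbot: "N \<noteq> bot"
  proof
    assume "N = bot"
    then have "eventually (\<lambda>x. False) N" by simp
    then show False unfolding N_def ev by blast
  qed
  have NE: "\<forall>\<^sub>F i in N. id i \<in> E"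
    unfolding N_def ev using A0 AE subspace_diff[OF S] by (intro bexI[of _ 0]) auto
  have conv: "order_conv_in UNIV N id 0"
    unfolding order_conv_in_def
  proof (intro exI conjI)
    define G where "G = {b - a | b a. a \<in> A \<and> (\<forall>a'\<in>A. a' \<le> b)}"
    show "G \<subseteq> UNIV" by simp
    show "is_inf_in UNIV G 0"
      unfolding is_inf_in_def
    proof (intro conjI ballI impI)
      show "(0::'a) \<in> UNIV" by simp
    next
      fix g assume "g \<in> G" then show "0 \<le> g" unfolding G_def by auto
    next
      fix w :: 'a assume "\<forall>g\<in>G. w \<le> g"
      then have "\<forall>b a. a \<in> A \<and> (\<forall>a'\<in>A. a' \<le> b) \<longrightarrow> w \<le> b - a" unfolding G_def by blast
      moreover have "\<forall>a\<in>A. a \<le> f" unfolding A_def by blast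
      ultimately show "w \<le> 0" using upper_minus_inf[OF arch A0] by blast
    qed
    show "\<forall>g\<in>G. \<forall>\<^sub>F i in N. 0 - g \<le> id i \<and> id i \<le> 0 + g"
    proof
      fix g assume "g \<in> G"
      then obtain b a0 where g: "g = b - a0" "a0 \<in> A" "\<forall>a'\<in>A. a' \<le> b" unfolding G_def by blast
      show "\<forall>\<^sub>F i in N. 0 - g \<le> id i \<and> id i \<le> 0 + g"
        unfolding N_def ev
      proof (intro bexI[OF _ g(2)] ballI impI)
        fix a a' assume "a \<in> A" "a' \<in> A" "a0 \<le> a \<and> a \<le> a'"
        moreover have "a' \<le> b" using g(3) \<open>a' \<in> A\<close> by blast
        ultimately show "0 - g \<le> id (a' - a) \<and> id (a' - a) \<le> 0 + g"
          unfolding g(1) using g(3) g(2) by (auto intro: order_trans[of _ 0] diff_mono)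
      qed
    qed
  qed
  have "order_conv_in E N id 0"
    using emb Nbot NE conv subspace_0[OF S] unfolding order_embedding_def by blast
  then obtain G' where G': "G' \<subseteq> E" "is_inf_in E G' 0"
    "\<forall>g\<in>G'. \<exists>a0\<in>A. \<forall>a\<in>A. \<forall>a'\<in>A. a0 \<le> a \<and> a \<le> a' \<longrightarrow> 0 - g \<le> a' - a \<and> a' - a \<le> 0 + g"
    unfolding order_conv_in_def N_def ev by auto
  obtain u0 where u0: "u0 \<in> E" "0 \<le> u0" "\<forall>a\<in>A. a \<le> u0"
  proof (cases "G' = {}")
    case True
    then have "\<forall>y\<in>E. y \<le> 0" using G'(2) unfolding is_inf_in_def by blast
    then show ?thesis using that[of 0] subspace_0[OF S] AE by blast
  next
    case False
    then obtain g where g: "g \<in> G'" by blast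
    then obtain a0 where a0: "a0 \<in> A" "\<forall>a\<in>A. \<forall>a'\<in>A. a0 \<le> a \<and> a \<le> a' \<longrightarrow> a' - a \<le> g"
      using G'(3) by fastforce
    have ub: "\<forall>a\<in>A. a \<le> a0 + g"
    proof
      fix a assume "a \<in> A"
      then have "sup a a0 - a0 \<le> g" using a0 Asup by simp
      then show "a \<le> a0 + g" by (simp add: diff_le_eq add.commute)
    qed
    show ?thesis
    proof (rule that[of "a0 + g"])
      show "a0 + g \<in> E" using subspace_add[OF S] a0(1) AE g G'(1) by blast
      show "\<forall>a\<in>A. a \<le> a0 + g" by (rule ub)
      show "0 \<le> a0 + g" using ub A0 by blast
    qed
  qed
  define h where "h = inf f u0"
  define k where "k = f - h"
  have k_eq: "k = sup (f - u0) 0" unfolding k_def h_def by (rule sub_inf)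
  have h0: "0 \<le> h" unfolding h_def using f0 u0(2) by simp
  have k0: "0 \<le> k" unfolding k_eq by simp
  have hI: "h \<in> ideal_gen E"
  proof (rule ideal_gen_solid)
    show "u0 \<in> ideal_gen E" using u0(1) E_sub_ideal_gen by blast
    show "vabs h \<le> vabs u0" using vabs_pos[OF h0] vabs_pos[OF u0(2)] unfolding h_def by simp
  qed
  have kD: "k \<in> disj_compl (ideal_gen E)"
    unfolding disj_compl_def
  proof (intro CollectI ballI)
    fix h' assume h': "h' \<in> ideal_gen E"
    define v where "v = inf k (vabs h')"
    have v0: "0 \<le> v" unfolding v_def using k0 vabs_nonneg by simp
    have vI: "v \<in> ideal_gen E"
    proof (rule ideal_gen_solid[OF h'])
      have "vabs v = v" by (rule vabs_pos[OF v0])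
      also have "v \<le> vabs h'" unfolding v_def by simp
      finally show "vabs v \<le> vabs h'" .
    qed
    have "v = 0"
    proof (rule ccontr)
      assume "v \<noteq> 0"
      then have "0 < v" using v0 by simp
      then obtain e' where e': "e' \<in> E" "0 < e'" "e' \<le> v"
        using dense vI unfolding order_dense_in_def by blast
      have e'k: "e' \<le> k" using e'(3) unfolding v_def by simp
      have "\<forall>g\<in>G'. e' \<le> g"
      proof
        fix g assume "g \<in> G'"
        then obtain a0 where a0: "a0 \<in> A" "\<forall>a\<in>A. \<forall>a'\<in>A. a0 \<le> a \<and> a \<le> a' \<longrightarrow> a' - a \<le> g"
          using G'(3) by fastforce
        have "a0 \<le> h" unfolding h_def using a0(1) u0(3) unfolding A_def by simp
        then have "a0 + e' \<le> h + k" using e'k by (rule add_mono)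
        then have "a0 + e' \<le> f" unfolding k_def by simp
        moreover have "a0 + e' \<in> E" using subspace_add[OF S] a0(1) AE e'(1) by blast
        moreover have "0 \<le> a0 + e'" using a0(1) e'(2) unfolding A_def by simp
        ultimately have "a0 + e' \<in> A" unfolding A_def by blast
        moreover have "a0 \<le> a0 + e'" using e'(2) by simp
        ultimately have "(a0 + e') - a0 \<le> g" using a0 by blast
        then show "e' \<le> g" by simp
      qed
      then have "e' \<le> 0" using G'(2) e'(1) unfolding is_inf_in_def by blast
      then show False using e'(2) by simp
    qed
    then show "inf (vabs k) (vabs h') = 0" unfolding vabs_pos[OF k0] v_def .
  qed
  have "f = h + k" unfolding k_def by simp
  then show ?thesis using hI kD by blast
qed


lemma dc_diff:
  fixes k1 k2 :: "'a::{ordered_real_vector, lattice}"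
  assumes "k1 \<in> disj_compl H" "k2 \<in> disj_compl H"
  shows "k1 - k2 \<in> disj_compl H"
  unfolding disj_compl_def
proof (intro CollectI ballI)
  fix h assume h: "h \<in> H"
  have 1: "inf (vabs k1) (vabs h) = 0" "inf (vabs k2) (vabs h) = 0"
    using assms h unfolding disj_compl_def by auto
  have "vabs (k1 - k2) \<le> vabs k1 + vabs k2"
    using vabs_triangle[of k1 "-k2"] vabs_minus[of k2] by simp
  then have "inf (vabs (k1 - k2)) (vabs h) \<le> inf (vabs h) (vabs k1 + vabs k2)"
    by (metis inf_commute inf_mono order_refl)
  also have "\<dots> \<le> inf (vabs h) (vabs k1) + inf (vabs h) (vabs k2)"
    by (intro subadd vabs_nonneg)
  also have "\<dots> = 0" using 1 by (simp add: inf_commute)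
  finally show "inf (vabs (k1 - k2)) (vabs h) = 0"
    by (intro order.antisym) (simp_all add: vabs_nonneg)
qed

lemma pos_neg_split: "sup (f::'a::{ordered_real_vector, lattice}) 0 - sup (-f) 0 = f"
proof -
  have "- inf f 0 = sup (-f) 0" using neg_inf[of f 0] by simp
  then have "sup f 0 - sup (-f) 0 = sup f 0 + inf f 0" by (metis diff_minus_eq_add)
  also have "\<dots> = f" using inf_sup_add[of f 0] by (simp add: add.commute)
  finally show ?thesis .
qed

lemma part2:
  fixes E :: "'a::{ordered_real_vector, lattice} set"
  assumes arch: "archimedean_vl TYPE('a)"
    and E: "vector_sublattice E"
    and dense: "order_dense_in E (ideal_gen E)"
    and emb: "order_embedding E"
  shows "projection_band (ideal_gen E)"
  unfolding projection_band_def
proof (intro conjI allI ideal_gen_ideal)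
  fix f :: 'a
  obtain h1 k1 where 1: "h1 \<in> ideal_gen E" "k1 \<in> disj_compl (ideal_gen E)" "sup f 0 = h1 + k1"
    using pos_decomp[OF arch E dense emb, of "sup f 0"] by auto
  obtain h2 k2 where 2: "h2 \<in> ideal_gen E" "k2 \<in> disj_compl (ideal_gen E)" "sup (-f) 0 = h2 + k2"
    using pos_decomp[OF arch E dense emb, of "sup (-f) 0"] by auto
  have S: "subspace (ideal_gen E)" using ideal_gen_ideal unfolding order_ideal_def by blast
  have "f = (h1 - h2) + (k1 - k2)" using pos_neg_split[of f] 1(3) 2(3) by (simp add: algebra_simps)
  moreover have "h1 - h2 \<in> ideal_gen E" using subspace_diff[OF S 1(1) 2(1)] .
  moreover have "k1 - k2 \<in> disj_compl (ideal_gen E)" using dc_diff[OF 1(2) 2(2)] .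
  ultimately show "\<exists>h\<in>ideal_gen E. \<exists>k\<in>disj_compl (ideal_gen E). f = h + k" by blast
qed



lemma conv_iff: "(f - e \<le> x \<and> x \<le> f + e) \<longleftrightarrow> vabs (x - f) \<le> (e::'a::{ordered_real_vector, lattice})"
  unfolding vabs_le_iff by (auto simp: algebra_simps diff_le_eq le_diff_eq)

lemma pos_minus: "sup (a::'a::{ordered_real_vector, lattice}) 0 - a = sup (-a) 0"
proof -
  have "-a + sup a 0 = sup (-a + a) (-a + 0)" by (rule add_sup_l)
  then show ?thesis by (simp add: add.commute sup_commute)
qed

lemma L5:
  fixes t e0 v z :: "'a::{ordered_real_vector, lattice}"
  assumes "0 \<le> t" "t \<le> e0" "0 \<le> v" "v \<le> sup (z - t) 0"
  shows "t \<le> sup (z - v) (e0 - real n *\<^sub>R v)"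
proof -
  define a where "a = z - t"
  define b where "b = e0 - t"
  define c where "c = sup (a - v) (b - real n *\<^sub>R v)"
  have b0: "0 \<le> b" unfolding b_def using assms by simp
  have ceq: "c = - t + sup (z - v) (e0 - real n *\<^sub>R v)"
    unfolding c_def a_def b_def add_sup_l by (simp add: algebra_simps)
  define m where "m = sup (-c) 0"
  have negc: "-c = inf (v - a) (real n *\<^sub>R v - b)" unfolding c_def neg_sup by simp
  have "v - a \<le> sup a 0 - a" using assms(4) unfolding a_def by simp
  then have "v - a \<le> sup (-a) 0" unfolding pos_minus .
  then have m1: "m \<le> sup (-a) 0" unfolding m_def negc by (simp add: le_infI1)
  have "real n *\<^sub>R v - b \<le> real n *\<^sub>R v" using b0 by simp
  also have "\<dots> \<le> real n *\<^sub>R sup a 0" using assms(4) unfolding a_def by (intro scaleR_left_mono) auto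
  finally have "real n *\<^sub>R v - b \<le> real n *\<^sub>R sup a 0" .
  moreover have "0 \<le> real n *\<^sub>R sup a 0" by (simp add: scaleR_nonneg_nonneg)
  ultimately have m2: "m \<le> real n *\<^sub>R sup a 0" unfolding m_def negc by (simp add: le_infI2)
  have "m \<le> inf (sup (-a) 0) (real n *\<^sub>R sup a 0)" using m1 m2 by simp
  also have "\<dots> = 0"
    by (rule disj_scale) (auto simp: inf_commute pos_neg_disj)
  finally have "-c \<le> 0" unfolding m_def by simp
  then have "0 \<le> c" by simp
  then show ?thesis unfolding ceq by (simp add: le_diff_eq add.commute)
qed

lemma D:
  fixes v q :: "'a::{ordered_real_vector, lattice}"
  assumes "0 \<le> v" "inf v q \<le> 0"
  shows "inf v (sup q 0) = 0"
proof -
  define m where "m = inf v (sup q 0)"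
  define r where "r = sup (-q) 0"
  have qr: "sup q 0 = q + r" unfolding r_def using pos_minus[of q] by (simp add: algebra_simps)
  have "m - r \<le> q" unfolding m_def qr by (simp add: diff_le_eq add.commute le_infI2)
  moreover have "m - r \<le> v"
  proof -
    have "0 \<le> r" unfolding r_def by simp
    then have "m - r \<le> m" by simp
    also have "m \<le> v" unfolding m_def by simp
    finally show ?thesis .
  qed
  ultimately have "m - r \<le> inf v q" by simp
  then have "m - r \<le> 0" using assms(2) by (rule order_trans)
  then have "m \<le> r" by simp
  moreover have "m \<le> sup q 0" unfolding m_def by simp
  ultimately have "m \<le> inf (sup q 0) (sup (-q) 0)" unfolding r_def by simp
  then have "m \<le> 0" by (simp add: pos_neg_disj)
  moreover have "0 \<le> m" unfolding m_def using assms(1) by simp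
  ultimately show ?thesis unfolding m_def by simp
qed

lemma L7:
  fixes e0 v z :: "'a::{ordered_real_vector, lattice}"
  assumes "z \<le> sup (z - v) (e0 - real n *\<^sub>R v)" "0 \<le> v" "z \<le> e0"
  shows "real n *\<^sub>R v \<le> e0 - z"
proof -
  define d where "d = e0 - z"
  have d0: "0 \<le> d" unfolding d_def using assms by simp
  have "0 \<le> - z + sup (z - v) (e0 - real n *\<^sub>R v)" using assms(1) by (simp add: add.commute le_diff_eq[symmetric])
  then have "0 \<le> sup (-v) (d - real n *\<^sub>R v)" unfolding add_sup_l d_def by (simp add: algebra_simps)
  then have "- sup (-v) (d - real n *\<^sub>R v) \<le> 0" by simp
  then have "inf v (real n *\<^sub>R v - d) \<le> 0" unfolding neg_sup by simp
  then have i0: "inf v (sup (real n *\<^sub>R v - d) 0) = 0" by (rule D[OF assms(2)])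
  define p where "p = sup (real n *\<^sub>R v - d) 0"
  have "inf p (real n *\<^sub>R v) = 0"
    using i0 assms(2) unfolding p_def by (intro disj_scale) (auto simp: inf_commute)
  moreover have "p \<le> real n *\<^sub>R v" unfolding p_def using d0 assms(2)
    by (auto simp: scaleR_nonneg_nonneg)
  ultimately have "p = 0" by (simp add: inf_absorb1)
  then have "real n *\<^sub>R v - d \<le> 0" unfolding p_def by (metis sup_ge1)
  then show ?thesis unfolding d_def by simp
qed


lemma band_bound:
  fixes E :: "'a::{ordered_real_vector, lattice} set"
  assumes E: "vector_sublattice E"
    and pb: "projection_band (ideal_gen E)"
  shows "\<exists>e0\<in>E. 0 \<le> e0 \<and> (\<forall>y\<in>E. 0 \<le> y \<and> y \<le> g \<longrightarrow> y \<le> e0)"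
proof -
  obtain hh kk where hk: "hh \<in> ideal_gen E" "kk \<in> disj_compl (ideal_gen E)" "g = hh + kk"
    using pb unfolding projection_band_def by blast
  obtain e0 where e0: "e0 \<in> E" "0 \<le> e0" "vabs hh \<le> e0"
    using ideal_gen_sub_domset[OF E] hk(1) unfolding domset_def by blast
  have "\<forall>y\<in>E. 0 \<le> y \<and> y \<le> g \<longrightarrow> y \<le> e0"
  proof (intro ballI impI)
    fix y assume y: "y \<in> E" "0 \<le> y \<and> y \<le> g"
    have "y \<in> ideal_gen E" using y(1) E_sub_ideal_gen by blast
    then have dk: "inf (vabs kk) y = 0" using hk(2) vabs_pos[of y] y(2) unfolding disj_compl_def by auto
    have "g \<le> vabs g" by (rule vabs_ge)
    also have "\<dots> \<le> vabs hh + vabs kk" unfolding hk(3) by (rule vabs_triangle)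
    finally have "y \<le> vabs hh + vabs kk" using y(2) by (blast intro: order_trans)
    then have "y = inf y (vabs hh + vabs kk)" by (simp add: inf_absorb1)
    also have "\<dots> \<le> inf y (vabs hh) + inf y (vabs kk)"
      using y(2) by (intro subadd vabs_nonneg) auto
    also have "\<dots> = inf y (vabs hh)" using dk by (simp add: inf_commute)
    also have "\<dots> \<le> e0" using e0(3) by (simp add: le_infI2)
    finally show "y \<le> e0" .
  qed
  then show ?thesis using e0 by blast
qed

lemma part1:
  fixes E :: "'a::{ordered_real_vector, lattice} set"
  assumes arch: "archimedean_vl TYPE('a)"
    and E: "vector_sublattice E"
    and reg: "regular_sublattice E"
    and pb: "projection_band (ideal_gen E)"
  shows "order_embedding E"
  unfolding order_embedding_def
proof (intro allI impI iffI)
  fix N :: "'a filter" and x :: "'a \<Rightarrow> 'a" and f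
  assume "order_conv_in E N x f"
  then show "order_conv_in UNIV N x f"
    using reg unfolding order_conv_in_def regular_sublattice_def by blast
next
  fix N :: "'a filter" and x :: "'a \<Rightarrow> 'a" and f
  assume Nbot: "N \<noteq> bot" and xE: "\<forall>\<^sub>F i in N. x i \<in> E" and fE: "f \<in> E"
    and cF: "order_conv_in UNIV N x f"
  have S: "subspace E" using E by (rule vsl_sub)
  obtain G where G: "is_inf_in UNIV G 0" "\<forall>g\<in>G. \<forall>\<^sub>F i in N. f - g \<le> x i \<and> x i \<le> f + g"
    using cF unfolding order_conv_in_def by blast
  define y where "y i = vabs (x i - f)" for i
  have yE: "x i \<in> E \<Longrightarrow> y i \<in> E" for i
    unfolding y_def using subspace_diff[OF S _ fE] vsl_vabs[OF E] by blast
  have y0: "0 \<le> y i" for i unfolding y_def by (rule vabs_nonneg)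
  define G' where "G' = {e\<in>E. 0 \<le> e \<and> (\<forall>\<^sub>F i in N. f - e \<le> x i \<and> x i \<le> f + e)}"
  have G'y: "e \<in> G'" if "e \<in> E" "0 \<le> e" "\<forall>\<^sub>F i in N. y i \<le> e" for e
    unfolding G'_def using that conv_iff[of f e] unfolding y_def by auto
  show "order_conv_in E N x f"
    unfolding order_conv_in_def
  proof (intro exI conjI)
    show "G' \<subseteq> E" unfolding G'_def by blast
    show "\<forall>g\<in>G'. \<forall>\<^sub>F i in N. f - g \<le> x i \<and> x i \<le> f + g" unfolding G'_def by blast
    show "is_inf_in E G' 0"
      unfolding is_inf_in_def
    proof (intro conjI ballI impI)
      show "0 \<in> E" using subspace_0[OF S] .
    next
      fix e assume "e \<in> G'" then show "0 \<le> e" unfolding G'_def by blast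
    next
      fix z assume zE: "z \<in> E" and zlb: "\<forall>e\<in>G'. z \<le> e"
      have "z \<le> g" if gG: "g \<in> G" for g
      proof -
        obtain e0 where e0: "e0 \<in> E" "0 \<le> e0" "\<forall>y\<in>E. 0 \<le> y \<and> y \<le> g \<longrightarrow> y \<le> e0"
          using band_bound[OF E pb, of g] by blast
        define Si where "Si = {i. x i \<in> E \<and> y i \<le> g \<and> y i \<le> e0}"
        have evS: "\<forall>\<^sub>F i in N. i \<in> Si"
        proof -
          have "\<forall>\<^sub>F i in N. x i \<in> E \<and> (f - g \<le> x i \<and> x i \<le> f + g)"
            using xE G(2) gG by (auto intro: eventually_conj)
          then show ?thesis
          proof (rule eventually_mono)
            fix i assume i: "x i \<in> E \<and> (f - g \<le> x i \<and> x i \<le> f + g)"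
            then have "y i \<le> g" using conv_iff[of f g "x i"] unfolding y_def by blast
            then show "i \<in> Si" unfolding Si_def using i e0(3) yE y0 by blast
          qed
        qed
        obtain i0 where i0: "i0 \<in> Si" using eventually_happens'[OF Nbot evS] by blast
        have "e0 \<in> G'" using e0(1,2) by (intro G'y) (auto intro: eventually_mono[OF evS] simp: Si_def)
        then have ze0: "z \<le> e0" using zlb by blast
        define W where "W = {sup (z - y i) 0 | i. i \<in> Si}"
        have WE: "W \<subseteq> E" unfolding W_def Si_def
          using vsl_sup[OF E] subspace_diff[OF S zE] yE subspace_0[OF S] by blast
        have infW: "is_inf_in E W 0"
          unfolding is_inf_in_def
        proof (intro conjI ballI impI)
          show "0 \<in> E" using subspace_0[OF S] .
        next
          fix w assume "w \<in> W" then show "0 \<le> w" unfolding W_def by auto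
        next
          fix w assume wE: "w \<in> E" and wlb: "\<forall>u\<in>W. w \<le> u"
          define v where "v = sup w 0"
          have vE: "v \<in> E" unfolding v_def using vsl_sup[OF E wE subspace_0[OF S]] .
          have v0: "0 \<le> v" unfolding v_def by simp
          have vle: "v \<le> sup (z - y i) 0" if "i \<in> Si" for i
            using wlb that unfolding v_def W_def by auto
          have "real n *\<^sub>R v \<le> e0 - z" for n
          proof (rule L7[OF _ v0 ze0])
            define s where "s = sup (z - v) (e0 - real n *\<^sub>R v)"
            have sE: "s \<in> E" unfolding s_def
              using vsl_sup[OF E] subspace_diff[OF S] subspace_scale[OF S] zE vE e0(1) by metis
            have ys: "y i \<le> s" if "i \<in> Si" for i
              unfolding s_def using that vle[OF that] v0 y0[of i] unfolding Si_def
              by (intro L5) auto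
            have "0 \<le> s" using ys[OF i0] y0[of i0] by (rule order_trans[rotated])
            moreover have "\<forall>\<^sub>F i in N. y i \<le> s" using evS by (rule eventually_mono) (rule ys)
            ultimately have "s \<in> G'" using sE by (intro G'y) auto
            then show "z \<le> sup (z - v) (e0 - real n *\<^sub>R v)" using zlb unfolding s_def by blast
          qed
          then have "v = 0" using arch v0 unfolding archimedean_vl_def by blast
          then show "w \<le> 0" unfolding v_def by (metis sup_ge1)
        qed
        then have infWF: "is_inf_in UNIV W 0" using reg WE unfolding regular_sublattice_def by blast
        have "sup (z - g) 0 \<le> u" if "u \<in> W" for u
        proof -
          obtain i where i: "i \<in> Si" "u = sup (z - y i) 0" using \<open>u \<in> W\<close> unfolding W_def by blast
          have "z - g \<le> z - y i" using i(1) unfolding Si_def by (simp add: diff_mono)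
          then show ?thesis unfolding i(2) by (simp add: le_supI1)
        qed
        then have "sup (z - g) 0 \<le> 0" using infWF unfolding is_inf_in_def by blast
        then show "z \<le> g" by simp
      qed
      then show "z \<le> 0" using G(1) unfolding is_inf_in_def by blast
    qed
  qed
qed


theorem proposition5p5:
  fixes E :: "'a::{ordered_real_vector, lattice} set"
  assumes "archimedean_vl TYPE('a)"
    and "vector_sublattice E"
  shows "(regular_sublattice E \<and> projection_band (ideal_gen E) \<longrightarrow> order_embedding E)
    \<and> (order_dense_in E (ideal_gen E) \<and> order_embedding E \<longrightarrow> projection_band (ideal_gen E))"
  using part1[OF assms] part2[OF assms] by blast

end
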